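(* Let $n\ge 1$ and let $\mathbf{P}_A,\mathbf{P}_B,\mathbf{Q}_A,\mathbf{Q}_B\in\mathbb{R}^{n\times n}$ be symmetric positive definite matrices; put $\mathbf{C}_A=\mathbf{P}_A+\mathbf{Q}_A$, $\mathbf{C}_B=\mathbf{P}_B+\mathbf{Q}_B$. Let $J$ be an increasing cost function (see context). Let $(\mathbf{K},\mathbf{B}_F)$, with $\mathbf{K}=(\mathbf{K}_A,\mathbf{K}_B)$, define a conservative fusion. Then $(\mathbf{K},\mathbf{B}_F)$ is a solution of the Optimal Fusion with Split Covariances problem (minimize $J(\mathbf{B}_F)$ over all conservative fusions $(\mathbf{K},\mathbf{B}_F)$) if and only if there exists $\omega^*\in\arg\min_{\omega\in[0,1]} J(\mathbf{B}_{\mathrm{SCI}}(\omega))$ such that $\mathbf{B}_F=\mathbf{B}_{\mathrm{SCI}}(\omega^* )$.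
   Context: $\mathcal{A}_{\mathrm{Split}}=\{\mathbf{M}\in\mathbb{R}^{n\times n} : \begin{bmatrix}\mathbf{P}_A & \mathbf{M}\\ \mathbf{M}^\intercal & \mathbf{P}_B\end{bmatrix}\succeq 0\}$ (set of admissible cross-covariances). For gains $\mathbf{K}=(\mathbf{K}_A,\mathbf{K}_B)$ of $n\times n$ matrices and $\mathbf{P}_{AB}\in\mathcal{A}_{\mathrm{Split}}$, define $\mathbf{C}_F(\mathbf{K},\mathbf{P}_{AB})=\mathbf{K}_A\mathbf{C}_A\mathbf{K}_A^\intercal+\mathbf{K}_A\mathbf{P}_{AB}\mathbf{K}_B^\intercal+\mathbf{K}_B\mathbf{P}_{AB}^\intercal\mathbf{K}_A^\intercal+\mathbf{K}_B\mathbf{C}_B\mathbf{K}_B^\intercal$. A pair $(\mathbf{K},\mathbf{B}_F)$ with $\mathbf{B}_F$ a symmetric matrix defines a conservative fusion if $\mathbf{K}_A+\mathbf{K}_B=\mathbf{I}$ and $\mathbf{B}_F\succeq\mathbf{C}_F(\mathbf{K},\mathbf{P}_{AB})$ for all $\mathbf{P}_{AB}\in\mathcal{A}_{\mathrm{Split}}$. For $\omega\in[0,1]$ and $\bar\omega=1-\omega$, the SCI bound is defined by $\mathbf{B}_{\mathrm{SCI}}(\omega)^{-1}=\omega(\mathbf{P}_A+\omega\mathbf{Q}_A)^{-1}+\bar\omega(\mathbf{P}_B+\bar\omega\mathbf{Q}_B)^{-1}$. A cost function $J$ on symmetric positive semidefinite matrices is increasing if $\mathbf{P}\preceq\mathbf{Q}$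 implies $J(\mathbf{P})\le J(\mathbf{Q})$, and $\mathbf{P}\preceq\mathbf{Q}$ with $\mathbf{P}\neq\mathbf{Q}$ implies $J(\mathbf{P})<J(\mathbf{Q})$. Here $\preceq$ is the Loewner order. *)

theory Defs
  imports "HOL-Analysis.Analysis"
begin

type_synonym 'n mat = "real^'n^'n"

definition sym_mat :: "real^'m^'m \<Rightarrow> bool" where
  "sym_mat M \<longleftrightarrow> transpose M = M"

definition psd :: "real^'m^'m \<Rightarrow> bool" where
  "psd M \<longleftrightarrow> sym_mat M \<and> (\<forall>x. 0 \<le> x \<bullet> (M *v x))"

definition pd :: "real^'m^'m \<Rightarrow> bool" where
  "pd M \<longleftrightarrow> sym_mat M \<and> (\<forall>x. x \<noteq> 0 \<longrightarrow> 0 < x \<bullet> (M *v x))"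

definition loewner_le :: "real^'m^'m \<Rightarrow> real^'m^'m \<Rightarrow> bool" where
  "loewner_le P Q \<longleftrightarrow> psd (Q - P)"

definition block_mat :: "real^'n^'n \<Rightarrow> real^'n^'n \<Rightarrow> real^'n^'n \<Rightarrow> real^'n^'n
    \<Rightarrow> real^('n + 'n)^('n + 'n)" where
  "block_mat A B C D = (\<chi> i j. case i of
       Inl a \<Rightarrow> (case j of Inl b \<Rightarrow> A $ a $ b | Inr b \<Rightarrow> B $ a $ b)
     | Inr a \<Rightarrow> (case j of Inl b \<Rightarrow> C $ a $ b | Inr b \<Rightarrow> D $ a $ b))"

definition A_split :: "'n::finite mat \<Rightarrow> 'n mat \<Rightarrow> 'n mat set" where
  "A_split PA PB = {M. psd (block_mat PA M (transpose M) PB)}"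

definition C_F :: "'n::finite mat \<Rightarrow> 'n mat \<Rightarrow> 'n mat \<Rightarrow> 'n mat \<Rightarrow> 'n mat \<Rightarrow> 'n mat" where
  "C_F CA CB KA KB PAB =
     KA ** CA ** transpose KA + KA ** PAB ** transpose KB
   + KB ** transpose PAB ** transpose KA + KB ** CB ** transpose KB"

definition conservative_fusion ::
  "'n::finite mat \<Rightarrow> 'n mat \<Rightarrow> 'n mat \<Rightarrow> 'n mat \<Rightarrow> 'n mat \<Rightarrow> 'n mat \<Rightarrow> 'n mat \<Rightarrow> bool" where
  "conservative_fusion PA PB QA QB KA KB BF \<longleftrightarrow>
     KA + KB = mat 1 \<and> sym_mat BF \<and>
     (\<forall>PAB \<in> A_split PA PB. loewner_le (C_F (PA + QA) (PB + QB) KA KB PAB) BF)"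

definition B_SCI :: "'n::finite mat \<Rightarrow> 'n mat \<Rightarrow> 'n mat \<Rightarrow> 'n mat \<Rightarrow> real \<Rightarrow> 'n mat" where
  "B_SCI PA PB QA QB \<omega> = matrix_inv
     (\<omega> *\<^sub>R matrix_inv (PA + \<omega> *\<^sub>R QA) + (1 - \<omega>) *\<^sub>R matrix_inv (PB + (1 - \<omega>) *\<^sub>R QB))"

definition increasing_cost :: "('n::finite mat \<Rightarrow> real) \<Rightarrow> bool" where
  "increasing_cost J \<longleftrightarrow>
     (\<forall>P Q. psd P \<and> psd Q \<and> loewner_le P Q \<longrightarrow> J P \<le> J Q) \<and>
     (\<forall>P Q. psd P \<and> psd Q \<and> loewner_le P Q \<and> P \<noteq> Q \<longrightarrow> J P < J Q)"

definition optimal_fusion ::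
  "('n::finite mat \<Rightarrow> real) \<Rightarrow> 'n mat \<Rightarrow> 'n mat \<Rightarrow> 'n mat \<Rightarrow> 'n mat \<Rightarrow> 'n mat \<Rightarrow> 'n mat \<Rightarrow> 'n mat \<Rightarrow> bool" where
  "optimal_fusion J PA PB QA QB KA KB BF \<longleftrightarrow>
     conservative_fusion PA PB QA QB KA KB BF \<and>
     (\<forall>KA' KB' BF'. conservative_fusion PA PB QA QB KA' KB' BF' \<longrightarrow> J BF \<le> J BF')"

end

theory Submission
  imports Defs
begin

definition G :: "real \<Rightarrow> real \<Rightarrow> real \<Rightarrow> real \<Rightarrow> real" where
  "G r a b w = w * (1 - w) * r - (1 - w) * a - w * b"

lemma G_expand: "G r a b w = G r a b w0 + (r - 2*w0*r + a - b) * (w - w0) - r * (w - w0)^2"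
  unfolding G_def by (simp add: power2_eq_square algebra_simps)

lemma G_lin: "s * G r1 a1 b1 w + (1 - s) * G r2 a2 b2 w
   = G (s*r1 + (1-s)*r2) (s*a1 + (1-s)*a2) (s*b1 + (1-s)*b2) w"
  unfolding G_def by (simp add: algebra_simps)

lemma G_concave: "(u - l) * G r a b w = (u - w) * G r a b l + (w - l) * G r a b u + r * (w - l) * (u - w) * (u - l)"
  unfolding G_def by (simp add: algebra_simps power2_eq_square)

lemma G_N:
  assumes "0 \<le> a" "0 \<le> b" "sqrt a + sqrt b \<le> sqrt r"
  shows "\<exists>w\<in>{0..1}. 0 \<le> G r a b w"
proof (cases "a + b = 0")
  case True
  then have "a = 0" "b = 0" using assms by auto
  then show ?thesis by (intro bexI[of _ 0]) (auto simp: G_def)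
next
  case False
  define s where "s = sqrt a"
  define t where "t = sqrt b"
  have s0: "0 \<le> s" and t0: "0 \<le> t" using assms by (auto simp: s_def t_def)
  have "0 < a \<or> 0 < b" using False assms by linarith
  then have st: "0 < s + t" using s0 t0 unfolding s_def t_def
    by (auto intro: add_pos_nonneg add_nonneg_pos)
  have a: "a = s^2" and b: "b = t^2" using assms by (auto simp: s_def t_def)
  have r0: "0 \<le> r" using assms(3) s0 t0 unfolding s_def t_def
    by (metis add_nonneg_nonneg order_trans real_sqrt_ge_0_iff)
  have "(s+t)^2 \<le> r"
    using assms(3) s0 t0 r0 unfolding s_def[symmetric] t_def[symmetric]
    by (metis add_nonneg_nonneg power_mono real_sqrt_pow2)
  define w where "w = s / (s + t)"
  have w01: "w \<in> {0..1}" using s0 t0 st by (auto simp: w_def divide_simps)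
  have w1: "1 - w = t / (s + t)" using st by (simp add: w_def field_simps)
  have "(s+t)^2 * G r a b w = s * t * (r - (s+t)^2)"
  proof -
    define p where "p = s + t"
    have p: "p \<noteq> 0" using st p_def by simp
    have e1: "p^2 * (s/p * (t/p) * r) = s * t * r" using p by (simp add: power2_eq_square field_simps)
    have e2: "p^2 * (t/p * s^2) = p * t * s^2" using p by (simp add: power2_eq_square field_simps)
    have e3: "p^2 * (s/p * t^2) = p * s * t^2" using p by (simp add: power2_eq_square field_simps)
    have "(s+t)^2 * G r a b w = p^2 * (s/p * (t/p) * r) - p^2 * (t/p * s^2) - p^2 * (s/p * t^2)"
      unfolding G_def a b w1 unfolding w_def p_def[symmetric] by (simp add: algebra_simps)
    also have "\<dots> = s * t * r - p * t * s^2 - p * s * t^2" using e1 e2 e3 by simp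
    also have "\<dots> = s * t * (r - (s+t)^2)" by (simp add: p_def power2_eq_square algebra_simps)
    finally show ?thesis .
  qed
  also have "\<dots> \<ge> 0" using s0 t0 \<open>(s+t)^2 \<le> r\<close> by simp
  finally have "0 \<le> G r a b w" using st
    by (metis zero_le_mult_iff zero_less_power not_le order_less_imp_le)
  then show ?thesis using w01 by blast
qed

lemma pair_two:
  fixes rx ax bx ry ay by' :: real
  assumes rx: "0 \<le> rx" and ry: "0 \<le> ry"
    and H: "\<forall>s\<in>{0..1}. \<exists>w\<in>{0..1}. 0 \<le> s * G rx ax bx w + (1 - s) * G ry ay by' w"
    and wx: "wx \<in> {0..1}" "0 \<le> G rx ax bx wx"
    and wy: "wy \<in> {0..1}" "0 \<le> G ry ay by' wy"
    and lt: "wx < wy"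
  shows "\<exists>w\<in>{0..1}. 0 \<le> G rx ax bx w \<and> 0 \<le> G ry ay by' w"
proof (rule ccontr)
  assume C: "\<not> ?thesis"
  let ?gx = "G rx ax bx" and ?gy = "G ry ay by'"
  have C': "\<And>w. w \<in> {0..1} \<Longrightarrow> ?gx w < 0 \<or> ?gy w < 0" by (meson C not_le)
  define d where "d = (\<lambda>w. ?gx w - ?gy w)"
  have dx: "0 \<le> d wx" using C' wx unfolding d_def by force
  have dy: "d wy \<le> 0" using C' wy unfolding d_def by force
  have cont: "continuous_on {wx..wy} d" unfolding d_def G_def by (intro continuous_intros)
  obtain w0 where w0: "wx \<le> w0" "w0 \<le> wy" "d w0 = 0"
    using IVT2'[of d wy 0 wx, OF dy dx _ cont] lt by auto
  have w001: "w0 \<in> {0..1}" using w0 wx wy by auto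
  define c where "c = ?gx w0"
  have cy: "?gy w0 = c" using w0 unfolding d_def c_def by simp
  have cneg: "c < 0" using C'[OF w001] cy c_def by auto
  define Dx where "Dx = rx - 2*w0*rx + ax - bx"
  define Dy where "Dy = ry - 2*w0*ry + ay - by'"
  have ex: "\<And>w. ?gx w = c + Dx * (w - w0) - rx * (w - w0)^2"
    unfolding c_def Dx_def by (rule G_expand)
  have ey: "\<And>w. ?gy w = c + Dy * (w - w0) - ry * (w - w0)^2"
    unfolding cy[symmetric] Dy_def by (rule G_expand)
  have "w0 \<noteq> wx" using dx w0 C' wx cneg cy c_def unfolding d_def by force
  then have wxl: "wx < w0" using w0 by simp
  have "w0 \<noteq> wy" using dy w0 C' wy cneg cy c_def unfolding d_def by force
  then have wyl: "w0 < wy" using w0 by simp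
  have "0 \<le> c + Dx * (wx - w0) - rx * (wx - w0)^2" using wx ex by metis
  then have "0 < Dx * (wx - w0)" using cneg rx
    by (smt (verit, ccfv_SIG) mult_nonneg_nonneg zero_le_power2)
  then have Dxn: "Dx < 0" using wxl by (simp add: mult_less_0_iff zero_less_mult_iff)
  have "0 \<le> c + Dy * (wy - w0) - ry * (wy - w0)^2" using wy ey by metis
  then have "0 < Dy * (wy - w0)" using cneg ry
    by (smt (verit, ccfv_SIG) mult_nonneg_nonneg zero_le_power2)
  then have Dyp: "0 < Dy" using wyl by (simp add: zero_less_mult_iff)
  define s where "s = Dy / (Dy - Dx)"
  have s01: "s \<in> {0..1}" using Dxn Dyp by (auto simp: s_def divide_simps)
  have sD: "s * Dx + (1 - s) * Dy = 0" using Dxn Dyp by (simp add: s_def field_simps)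
  obtain w where w: "w \<in> {0..1}" and hw: "0 \<le> s * ?gx w + (1 - s) * ?gy w" using H s01 by blast
  have "s * ?gx w + (1 - s) * ?gy w = c + (s * Dx + (1 - s) * Dy) * (w - w0) - (s * rx + (1-s) * ry) * (w - w0)^2"
    unfolding ex ey by (simp add: algebra_simps)
  also have "\<dots> = c - (s * rx + (1-s) * ry) * (w - w0)^2" using sD by simp
  also have "\<dots> < 0"
  proof -
    have "0 \<le> s*rx + (1-s)*ry" using s01 rx ry by simp
    then have "0 \<le> (s*rx + (1-s)*ry) * (w - w0)^2" by simp
    then show ?thesis using cneg by linarith
  qed
  finally show False using hw by simp
qed

lemma pair:
  fixes rx ax bx ry ay by' :: real
  assumes rx: "0 \<le> rx" and ry: "0 \<le> ry"
    and H: "\<forall>s\<in>{0..1}. \<exists>w\<in>{0..1}. 0 \<le> s * G rx ax bx w + (1 - s) * G ry ay by' w"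
  shows "\<exists>w\<in>{0..1}. 0 \<le> G rx ax bx w \<and> 0 \<le> G ry ay by' w"
proof -
  obtain wx where wx: "wx \<in> {0..1}" "0 \<le> G rx ax bx wx" using H[rule_format, of 1] by auto
  obtain wy where wy: "wy \<in> {0..1}" "0 \<le> G ry ay by' wy" using H[rule_format, of 0] by auto
  consider "wx = wy" | "wx < wy" | "wy < wx" by linarith
  then show ?thesis
  proof cases
    case 1 then show ?thesis using wx wy by blast
  next
    case 2 then show ?thesis using pair_two[OF rx ry H wx wy] by blast
  next
    case 3
    have H': "\<forall>s\<in>{0..1}. \<exists>w\<in>{0..1}. 0 \<le> s * G ry ay by' w + (1 - s) * G rx ax bx w"
    proof
      fix s :: real assume "s \<in> {0..1}"
      then have "1 - s \<in> {0..1}" by auto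
      then obtain w where "w \<in> {0..1}" "0 \<le> (1-s) * G rx ax bx w + (1 - (1-s)) * G ry ay by' w"
        using H by blast
      then show "\<exists>w\<in>{0..1}. 0 \<le> s * G ry ay by' w + (1 - s) * G rx ax bx w" by (auto simp: algebra_simps)
    qed
    show ?thesis using pair_two[OF ry rx H' wy wx 3] by blast
  qed
qed

lemma helly1:
  fixes g :: "'a \<Rightarrow> real \<Rightarrow> real"
  assumes ne: "\<And>x. \<exists>w\<in>{0..1}. 0 \<le> g x w"
    and cont: "\<And>x. continuous_on {0..1} (g x)"
    and cvx: "\<And>x l u w. l \<le> w \<Longrightarrow> w \<le> u \<Longrightarrow> 0 \<le> g x l \<Longrightarrow> 0 \<le> g x u \<Longrightarrow> 0 \<le> g x w"
    and pw: "\<And>x y. \<exists>w\<in>{0..1}. 0 \<le> g x w \<and> 0 \<le> g y w"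
  shows "\<exists>w\<in>{0..1}. \<forall>x. 0 \<le> g x w"
proof -
  define I where "I x = {w \<in> {0..1}. (0::real) \<le> g x w}" for x
  have cl: "closed (I x)" for x
    unfolding I_def using continuous_on_closed_Collect_le[OF continuous_on_const cont[of x]] by auto
  have Ine: "I x \<noteq> {}" for x using ne[of x] unfolding I_def by auto
  have bdd: "bdd_below (I x)" "bdd_above (I x)" for x unfolding I_def by (auto intro: bdd_belowI bdd_aboveI)
  define L where "L x = Inf (I x)" for x
  define U where "U x = Sup (I x)" for x
  have LI: "L x \<in> I x" for x unfolding L_def using closed_contains_Inf[OF Ine bdd(1) cl] .
  have UI: "U x \<in> I x" for x unfolding U_def using closed_contains_Sup[OF Ine bdd(2) cl] .
  have LU: "L x \<le> U y" for x y
  proof -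
    obtain w where "w \<in> I x" "w \<in> I y" using pw[of x y] unfolding I_def by auto
    then show ?thesis unfolding L_def U_def using bdd
      by (meson cInf_lower cSup_upper order_trans)
  qed
  define ws where "ws = Sup (range L)"
  have bddL: "bdd_above (range L)" using LI unfolding I_def by (auto intro!: bdd_aboveI[of _ 1])
  have L_le: "L y \<le> ws" for y unfolding ws_def using bddL by (simp add: cSup_upper)
  have le_U: "ws \<le> U y" for y unfolding ws_def using LU by (auto intro!: cSup_least)
  have "ws \<in> {0..1}" using L_le le_U LI UI unfolding I_def
    by (metis (no_types, lifting) atLeastAtMost_iff mem_Collect_eq order_trans)
  moreover have "0 \<le> g y ws" for y using cvx[OF L_le[of y] le_U[of y]] LI UI unfolding I_def by auto
  ultimately show ?thesis by blast
qed

definition qf :: "real^'n^'n \<Rightarrow> real^'n \<Rightarrow> real" where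
  "qf M x = x \<bullet> (M *v x)"

lemma qf_comb: "qf M (c *\<^sub>R u + d *\<^sub>R v) = c^2 * qf M u + c*d*(u \<bullet> (M *v v) + v \<bullet> (M *v u)) + d^2 * qf M v"
  unfolding qf_def
  apply (simp only: matrix_vector_right_distrib matrix_vector_mult_scaleR inner_add_left inner_add_right
      inner_scaleR_left inner_scaleR_right)
  apply (simp add: power2_eq_square field_simps)
  done

lemma qf_scale: "qf M (c *\<^sub>R u) = c^2 * qf M u"
  unfolding qf_def by (simp add: matrix_vector_mult_scaleR power2_eq_square)

lemma qf_add_mat: "qf (M + N) x = qf M x + qf N x"
  unfolding qf_def by (simp add: matrix_vector_mult_add_rdistrib inner_add_right)

lemma qf_diff_mat: "qf (M - N) x = qf M x - qf N x"
  unfolding qf_def by (simp add: matrix_vector_mult_diff_rdistrib inner_diff_right)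

lemma qf_scale_mat: "qf (c *\<^sub>R M) x = c * qf M x"
  unfolding qf_def by (simp add: scaleR_matrix_vector_assoc[symmetric])

lemma qf_rot: "qf M (c *\<^sub>R u + s *\<^sub>R v) + qf M ((-s) *\<^sub>R u + c *\<^sub>R v) = (c^2 + s^2) * (qf M u + qf M v)"
  unfolding qf_comb by (simp add: algebra_simps power2_eq_square)

lemma sum_ratio:
  fixes a1 a2 b1 b2 r1 r2 :: real
  assumes "0 \<le> a1" "0 \<le> a2" "0 \<le> b1" "0 \<le> b2"
    and h1: "sqrt a1 + sqrt b1 \<le> sqrt r1" and h2: "sqrt a2 + sqrt b2 \<le> sqrt r2"
    and e1: "(b1+b2)*a1 = (a1+a2)*b1" and e2: "(b1+b2)*a2 = (a1+a2)*b2"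
  shows "sqrt (a1+a2) + sqrt (b1+b2) \<le> sqrt (r1+r2)"
proof (cases "b1 + b2 = 0")
  case True
  then have "b1 = 0" "b2 = 0" using assms by auto
  then have "a1 \<le> r1" "a2 \<le> r2" using h1 h2 by simp_all
  then show ?thesis using \<open>b1 = 0\<close> \<open>b2 = 0\<close> by simp
next
  case False
  define B where "B = b1 + b2"
  have Bp: "0 < B" using False assms B_def by simp
  define k where "k = (a1 + a2) / B"
  have k0: "0 \<le> k" using assms Bp k_def by simp
  have a1: "a1 = k * b1" using e1 Bp unfolding k_def B_def[symmetric] by (simp add: field_simps)
  have a2: "a2 = k * b2" using e2 Bp unfolding k_def B_def[symmetric] by (simp add: field_simps)
  have "0 \<le> sqrt r1" using h1 assms by (smt (verit) real_sqrt_ge_zero)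
  then have r1: "0 \<le> r1" by simp
  have "0 \<le> sqrt r2" using h2 assms by (smt (verit) real_sqrt_ge_zero)
  then have r2: "0 \<le> r2" by simp
  have q1: "(sqrt k + 1) * sqrt b1 \<le> sqrt r1" using h1 unfolding a1 real_sqrt_mult distrib_right by simp
  have q2: "(sqrt k + 1) * sqrt b2 \<le> sqrt r2" using h2 unfolding a2 real_sqrt_mult distrib_right by simp
  have s1: "(sqrt k + 1)^2 * b1 \<le> r1"
  proof -
    have "((sqrt k + 1) * sqrt b1)^2 \<le> (sqrt r1)^2"
      using q1 by (intro power_mono) (auto simp: k0 assms)
    then show ?thesis using r1 assms k0 by (simp add: power_mult_distrib)
  qed
  have s2: "(sqrt k + 1)^2 * b2 \<le> r2"
  proof -
    have "((sqrt k + 1) * sqrt b2)^2 \<le> (sqrt r2)^2"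
      using q2 by (intro power_mono) (auto simp: k0 assms)
    then show ?thesis using r2 assms k0 by (simp add: power_mult_distrib)
  qed
  have "(sqrt k + 1)^2 * B \<le> r1 + r2" using s1 s2 B_def by (simp add: distrib_left)
  then have "sqrt ((sqrt k + 1)^2 * B) \<le> sqrt (r1 + r2)" by simp
  moreover have "sqrt ((sqrt k + 1)^2 * B) = sqrt k * sqrt B + sqrt B"
    using k0 Bp by (simp add: real_sqrt_mult distrib_right)
  moreover have "a1 + a2 = k * B" using a1 a2 B_def by (simp add: distrib_left)
  ultimately show ?thesis using k0 Bp by (simp add: real_sqrt_mult B_def)
qed

lemma two_sum:
  fixes R A B :: "real^'n^'n"
  assumes A0: "\<forall>x. 0 \<le> qf A x" and B0: "\<forall>x. 0 \<le> qf B x"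
    and H: "\<forall>x. sqrt (qf A x) + sqrt (qf B x) \<le> sqrt (qf R x)"
  shows "sqrt (qf A u + qf A v) + sqrt (qf B u + qf B v) \<le> sqrt (qf R u + qf R v)"
proof -
  define \<alpha> where "\<alpha> = qf A u + qf A v"
  define \<beta> where "\<beta> = qf B u + qf B v"
  define F where "F = \<beta> *\<^sub>R A - \<alpha> *\<^sub>R B"
  have fF: "qf F z = \<beta> * qf A z - \<alpha> * qf B z" for z
    by (simp only: F_def qf_diff_mat qf_scale_mat)
  have fuv: "qf F v = - qf F u" unfolding fF \<alpha>_def \<beta>_def by (simp add: algebra_simps)
  define c where "c = u \<bullet> (F *v v) + v \<bullet> (F *v u)"
  define h where "h \<theta> = (cos \<theta>)^2 * qf F u + cos \<theta> * sin \<theta> * c + (sin \<theta>)^2 * qf F v" for \<theta>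
  have hq: "h \<theta> = qf F (cos \<theta> *\<^sub>R u + sin \<theta> *\<^sub>R v)" for \<theta>
    unfolding h_def qf_comb c_def by simp
  have hc: "continuous_on {0..pi/2} h" unfolding h_def by (intro continuous_intros)
  have h0: "h 0 = qf F u" unfolding h_def by simp
  have hp: "h (pi/2) = - qf F u" unfolding h_def fuv by simp
  obtain \<theta> where "h \<theta> = 0"
  proof (cases "0 \<le> qf F u")
    case True
    then show ?thesis using IVT2'[of h "pi/2" 0 0, OF _ _ _ hc] h0 hp that by auto
  next
    case False
    then show ?thesis using IVT'[of h 0 0 "pi/2", OF _ _ _ hc] h0 hp that by auto
  qed
  define z1 where "z1 = cos \<theta> *\<^sub>R u + sin \<theta> *\<^sub>R v"
  define z2 where "z2 = (- sin \<theta>) *\<^sub>R u + cos \<theta> *\<^sub>R v"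
  have rot: "qf M z1 + qf M z2 = qf M u + qf M v" for M
    unfolding z1_def z2_def qf_rot by simp
  have f1: "qf F z1 = 0" using \<open>h \<theta> = 0\<close> hq z1_def by simp
  have f2: "qf F z2 = 0" using rot[of F] f1 fuv by simp
  have sA: "qf A z1 + qf A z2 = \<alpha>" using rot \<alpha>_def by simp
  have sB: "qf B z1 + qf B z2 = \<beta>" using rot \<beta>_def by simp
  have sR: "qf R z1 + qf R z2 = qf R u + qf R v" using rot by simp
  have "sqrt (qf A z1 + qf A z2) + sqrt (qf B z1 + qf B z2) \<le> sqrt (qf R z1 + qf R z2)"
  proof (rule sum_ratio)
    show "(qf B z1 + qf B z2) * qf A z1 = (qf A z1 + qf A z2) * qf B z1"
      using f1 unfolding fF sA sB by (simp add: algebra_simps)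
    show "(qf B z1 + qf B z2) * qf A z2 = (qf A z1 + qf A z2) * qf B z2"
      using f2 unfolding fF sA sB by (simp add: algebra_simps)
  qed (simp_all add: A0 B0 H)
  then show ?thesis using sA sB sR \<alpha>_def \<beta>_def by simp
qed

lemma core:
  fixes R A B :: "real^'n^'n"
  assumes A0: "\<forall>x. 0 \<le> qf A x" and B0: "\<forall>x. 0 \<le> qf B x"
    and H: "\<forall>x. sqrt (qf A x) + sqrt (qf B x) \<le> sqrt (qf R x)"
  shows "\<exists>w\<in>{0..1}. \<forall>x. 0 \<le> G (qf R x) (qf A x) (qf B x) w"
proof -
  have R0: "0 \<le> qf R x" for x
  proof -
    have "0 \<le> sqrt (qf R x)" using H A0 B0 by (smt (verit) real_sqrt_ge_zero)
    then show ?thesis by simp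
  qed
  define g where "g x w = G (qf R x) (qf A x) (qf B x) w" for x w
  have "\<exists>w\<in>{0..1}. \<forall>x. 0 \<le> g x w"
  proof (rule helly1)
    show "\<exists>w\<in>{0..1}. 0 \<le> g x w" for x
      unfolding g_def by (rule G_N) (simp_all add: A0 B0 H)
    show "continuous_on {0..1} (g x)" for x
      unfolding g_def[abs_def] G_def by (intro continuous_intros)
    show "0 \<le> g x w" if "l \<le> w" "w \<le> u" "0 \<le> g x l" "0 \<le> g x u" for x l u w
    proof (cases "l = u")
      case True then show ?thesis using that by simp
    next
      case False
      then have lu: "0 < u - l" using that by simp
      have "0 \<le> (u - w) * g x l + (w - l) * g x u + qf R x * (w - l) * (u - w) * (u - l)"
        using that R0[of x] lu by (intro add_nonneg_nonneg mult_nonneg_nonneg) auto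
      then have "0 \<le> (u - l) * g x w" unfolding g_def G_concave[symmetric] .
      then show ?thesis using lu by (simp add: zero_le_mult_iff)
    qed
    show "\<exists>w\<in>{0..1}. 0 \<le> g x w \<and> 0 \<le> g y w" for x y
      unfolding g_def
    proof (rule pair[OF R0 R0], rule ballI)
      fix s :: real assume s: "s \<in> {0..1}"
      define u where "u = sqrt s *\<^sub>R x"
      define v where "v = sqrt (1 - s) *\<^sub>R y"
      have q: "qf M u = s * qf M x" "qf M v = (1 - s) * qf M y" for M
        using s unfolding u_def v_def qf_scale by simp_all
      have "sqrt (qf A u + qf A v) + sqrt (qf B u + qf B v) \<le> sqrt (qf R u + qf R v)"
        by (rule two_sum[OF A0 B0 H])
      moreover have "0 \<le> qf A u + qf A v" "0 \<le> qf B u + qf B v" using A0 B0 by (simp_all add: add_nonneg_nonneg)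
      ultimately obtain w where "w \<in> {0..1}" "0 \<le> G (qf R u + qf R v) (qf A u + qf A v) (qf B u + qf B v) w"
        using G_N[of "qf A u + qf A v" "qf B u + qf B v" "qf R u + qf R v"] by blast
      then show "\<exists>w\<in>{0..1}. 0 \<le> s * G (qf R x) (qf A x) (qf B x) w + (1 - s) * G (qf R y) (qf A y) (qf B y) w"
        unfolding G_lin q by blast
    qed
  qed
  then show ?thesis unfolding g_def .
qed

lemma transpose_add: "transpose (A + B) = transpose A + transpose (B::real^'n^'m)"
  by (simp add: transpose_def vec_eq_iff)

lemma transpose_diff: "transpose (A - B) = transpose A - transpose (B::real^'n^'m)"
  by (simp add: transpose_def vec_eq_iff)

lemma transpose_zero: "transpose (0::real^'n^'m) = 0"
  by (simp add: transpose_def vec_eq_iff)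

lemma dot_mv: "x \<bullet> (M *v y) = (transpose M *v x) \<bullet> (y::real^'n)"
  by (simp add: dot_lmul_matrix)

lemma sym_dot: "sym_mat M \<Longrightarrow> x \<bullet> (M *v y) = y \<bullet> (M *v (x::real^'n))"
  unfolding sym_mat_def by (metis dot_mv inner_commute)

lemma dot_KML: "x \<bullet> ((K ** M ** transpose L) *v y) = (transpose K *v x) \<bullet> (M *v (transpose L *v (y::real^'n)))"
proof -
  have "(K ** M ** transpose L) *v y = K *v (M *v (transpose L *v y))"
    by (simp only: matrix_vector_mul_assoc matrix_mul_assoc)
  then show ?thesis by (simp only: dot_mv[of x K])
qed

lemma qf_KMK: "qf (K ** M ** transpose K) x = qf M (transpose K *v x)"
  unfolding qf_def by (rule dot_KML)

lemma inv_unique: "A ** B = mat 1 \<Longrightarrow> C ** A = mat 1 \<Longrightarrow> B = (C::real^'n^'n)"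
  by (metis matrix_mul_assoc matrix_mul_lid matrix_mul_rid)

lemma inv_props:
  assumes "invertible (M::real^'n^'n)"
  shows "M ** matrix_inv M = mat 1" "matrix_inv M ** M = mat 1"
proof -
  have "\<exists>A'. M ** A' = mat 1 \<and> A' ** M = mat 1" using assms unfolding invertible_def .
  then have "M ** matrix_inv M = mat 1 \<and> matrix_inv M ** M = mat 1"
    unfolding matrix_inv_def by (rule someI_ex)
  then show "M ** matrix_inv M = mat 1" "matrix_inv M ** M = mat 1" by auto
qed

lemma inv_mv: "invertible (M::real^'n^'n) \<Longrightarrow> M *v (matrix_inv M *v x) = (x::real^'n)"
  unfolding matrix_vector_mul_assoc using inv_props(1)[of M] by simp

lemma inv_mv2: "invertible (M::real^'n^'n) \<Longrightarrow> matrix_inv M *v (M *v x) = (x::real^'n)"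
  unfolding matrix_vector_mul_assoc using inv_props(2)[of M] by simp

lemma pd_sym: "pd M \<Longrightarrow> sym_mat M" unfolding pd_def by simp

lemma pd_qf: "pd M \<Longrightarrow> 0 \<le> qf M x"
  unfolding pd_def qf_def by (cases "x = 0") auto

lemma pd_qf0: "pd M \<Longrightarrow> qf M x = 0 \<Longrightarrow> x = 0"
  unfolding pd_def qf_def by (metis less_irrefl)

lemma pd_psd: "pd M \<Longrightarrow> psd M"
  unfolding psd_def using pd_qf pd_sym unfolding qf_def by blast

lemma pd_invertible: "pd (M::real^'n^'n) \<Longrightarrow> invertible M"
proof -
  assume "pd M"
  then have "\<forall>x. M *v x = 0 \<longrightarrow> x = 0" unfolding pd_def by (metis inner_zero_right less_irrefl)
  then show ?thesis unfolding invertible_left_inverse matrix_left_invertible_ker .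
qed

lemma inv_sym:
  assumes "sym_mat M" "invertible (M::real^'n^'n)"
  shows "sym_mat (matrix_inv M)"
proof -
  let ?N = "matrix_inv M"
  have "transpose (M ** ?N) = mat 1" using inv_props[OF assms(2)] by simp
  then have "transpose ?N ** M = mat 1" using assms(1) unfolding sym_mat_def matrix_transpose_mul by simp
  then have "?N = transpose ?N" using inv_unique[of M ?N "transpose ?N"] inv_props[OF assms(2)] by simp
  then show ?thesis unfolding sym_mat_def by simp
qed

lemma inv_pd:
  assumes "pd (M::real^'n^'n)"
  shows "pd (matrix_inv M)"
proof -
  have inv: "invertible M" using pd_invertible[OF assms] .
  have "0 < w \<bullet> (matrix_inv M *v w)" if "w \<noteq> 0" for w
  proof -
    define v where "v = matrix_inv M *v w"
    have Mv: "M *v v = w" unfolding v_def using inv_mv[OF inv] .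
    have "v \<noteq> 0" using Mv that by auto
    then have "0 < v \<bullet> (M *v v)" using assms unfolding pd_def by blast
    also have "v \<bullet> (M *v v) = w \<bullet> (matrix_inv M *v w)" using Mv v_def by (simp add: inner_commute)
    finally show ?thesis .
  qed
  then show ?thesis unfolding pd_def using inv_sym[OF pd_sym[OF assms] inv] by blast
qed

lemma inv_inv: "invertible M \<Longrightarrow> matrix_inv (matrix_inv M) = (M::real^'n^'n)"
proof -
  assume inv: "invertible M"
  have "invertible (matrix_inv M)" unfolding invertible_def using inv_props[OF inv] by blast
  from inv_props[OF this] inv_props[OF inv] show ?thesis
    using inv_unique by metis
qed

lemma inv_scale:
  assumes "invertible (M::real^'n^'n)" "c \<noteq> 0"
  shows "matrix_inv (c *\<^sub>R M) = (1/c) *\<^sub>R matrix_inv M"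
proof -
  have i: "invertible (c *\<^sub>R M)" using scalar_invertible assms by blast
  have "((1/c) *\<^sub>R matrix_inv M) ** (c *\<^sub>R M) = mat 1"
    using assms inv_props[OF assms(1)] by (simp add: matrix_scalar_ac scalar_matrix_assoc[symmetric])
  then show ?thesis using inv_unique inv_props(1)[OF i] by blast
qed

lemma pd_add: "pd M \<Longrightarrow> pd N \<Longrightarrow> pd (M + N)"
  unfolding pd_def sym_mat_def by (auto simp: transpose_add matrix_vector_mult_add_rdistrib inner_add_right add_pos_pos)

lemma pd_scale: "pd M \<Longrightarrow> 0 < c \<Longrightarrow> pd (c *\<^sub>R M)"
  unfolding pd_def sym_mat_def by (auto simp: transpose_scalar scaleR_matrix_vector_assoc[symmetric])

lemma sym_add: "sym_mat M \<Longrightarrow> sym_mat N \<Longrightarrow> sym_mat (M + N)"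
  unfolding sym_mat_def by (simp add: transpose_add)

lemma sym_diff: "sym_mat M \<Longrightarrow> sym_mat N \<Longrightarrow> sym_mat (M - N)"
  unfolding sym_mat_def by (simp add: transpose_diff)

lemma psd_iff_qf: "psd M \<longleftrightarrow> sym_mat M \<and> (\<forall>x. 0 \<le> qf M x)"
  unfolding psd_def qf_def ..

lemma qf_sym_CS:
  assumes "sym_mat M" "\<forall>x. 0 \<le> qf M x"
  shows "\<bar>u \<bullet> (M *v v)\<bar> \<le> sqrt (qf M u) * sqrt (qf M v)"
proof -
  define B where "B = u \<bullet> (M *v v)"
  have vu: "v \<bullet> (M *v u) = B" unfolding B_def using sym_dot[OF assms(1)] by simp
  have e: "0 \<le> qf M u + 2 * t * B + t^2 * qf M v" for t
  proof -
    have "0 \<le> qf M (1 *\<^sub>R u + t *\<^sub>R v)" using assms(2) by blast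
    also have "\<dots> = qf M u + 2 * t * B + t^2 * qf M v"
      unfolding qf_comb B_def[symmetric] vu by simp
    finally show ?thesis .
  qed
  have "B^2 \<le> qf M u * qf M v"
  proof (cases "qf M v = 0")
    case True
    have "B = 0"
    proof (rule ccontr)
      assume "B \<noteq> 0"
      have "0 \<le> qf M u + 2 * (-(qf M u + 1) / (2*B)) * B" using e[of "-(qf M u + 1) / (2*B)"] True by simp
      also have "\<dots> = -1" using \<open>B \<noteq> 0\<close> by (simp add: field_simps)
      finally show False by simp
    qed
    then show ?thesis using assms(2) True by simp
  next
    case False
    then have pv: "0 < qf M v" using assms(2) by (metis less_eq_real_def)
    have "0 \<le> qf M u + 2 * (-B / qf M v) * B + (-B / qf M v)^2 * qf M v" using e by blast
    also have "\<dots> = qf M u - B^2 / qf M v" using pv by (simp add: field_simps power2_eq_square)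
    finally show ?thesis using pv by (simp add: field_simps)
  qed
  then have "sqrt (B^2) \<le> sqrt (qf M u * qf M v)" by (rule real_sqrt_le_mono)
  then show ?thesis unfolding B_def[symmetric] by (simp add: real_sqrt_mult)
qed

definition lft :: "real^('n + 'n) \<Rightarrow> real^'n" where "lft z = (\<chi> i. z $ Inl i)"
definition rgt :: "real^('n + 'n) \<Rightarrow> real^'n" where "rgt z = (\<chi> i. z $ Inr i)"
definition mkz :: "real^'n \<Rightarrow> real^'n \<Rightarrow> real^('n + 'n)" where
  "mkz u v = (\<chi> k. case k of Inl i \<Rightarrow> u $ i | Inr i \<Rightarrow> v $ i)"

lemma lft_mkz[simp]: "lft (mkz u v) = u" by (simp add: lft_def mkz_def vec_eq_iff)
lemma rgt_mkz[simp]: "rgt (mkz u v) = v" by (simp add: rgt_def mkz_def vec_eq_iff)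

lemma sum_plus_univ: "(\<Sum>k\<in>(UNIV::('a::finite + 'b::finite) set). f k) = (\<Sum>i\<in>UNIV. f (Inl i)) + (\<Sum>i\<in>UNIV. f (Inr i))"
proof -
  have "(\<Sum>k\<in>(UNIV::('a + 'b) set). f k) = (\<Sum>k\<in>(UNIV <+> UNIV). f k)" by simp
  also have "\<dots> = (\<Sum>i\<in>UNIV. f (Inl i)) + (\<Sum>i\<in>UNIV. f (Inr i))"
    by (subst sum.Plus) (simp_all add: o_def)
  finally show ?thesis .
qed

lemma block_bil:
  "z \<bullet> (block_mat A B C D *v w) = lft z \<bullet> (A *v lft w) + lft z \<bullet> (B *v rgt w)
     + rgt z \<bullet> (C *v lft w) + rgt z \<bullet> (D *v rgt w)"
  by (simp add: inner_vec_def matrix_vector_mult_def block_mat_def lft_def rgt_def sum_plus_univ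
      sum_distrib_left distrib_left sum.distrib algebra_simps)

lemma block_transpose:
  "transpose (block_mat A B C D) = block_mat (transpose A) (transpose C) (transpose B) (transpose D)"
  by (simp add: transpose_def block_mat_def vec_eq_iff split: sum.split)

lemma adm_bound:
  assumes "PAB \<in> A_split PA PB"
  shows "a \<bullet> (PAB *v b) \<le> sqrt (qf PA a) * sqrt (qf PB b)"
proof -
  let ?M = "block_mat PA PAB (transpose PAB) PB"
  have ps: "psd ?M" using assms unfolding A_split_def by simp
  have "\<bar>mkz a 0 \<bullet> (?M *v mkz 0 b)\<bar> \<le> sqrt (qf ?M (mkz a 0)) * sqrt (qf ?M (mkz 0 b))"
    using ps unfolding psd_iff_qf by (intro qf_sym_CS) auto
  moreover have "mkz a 0 \<bullet> (?M *v mkz 0 b) = a \<bullet> (PAB *v b)" unfolding block_bil by simp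
  moreover have "qf ?M (mkz a 0) = qf PA a" unfolding qf_def block_bil by simp
  moreover have "qf ?M (mkz 0 b) = qf PB b" unfolding qf_def block_bil by simp
  ultimately show ?thesis by simp
qed

lemma qf_CF:
  "qf (C_F CA CB KA KB PAB) x = qf CA (transpose KA *v x) + qf CB (transpose KB *v x)
     + 2 * ((transpose KA *v x) \<bullet> (PAB *v (transpose KB *v x)))"
proof -
  have c1: "qf (KA ** PAB ** transpose KB) x = (transpose KA *v x) \<bullet> (PAB *v (transpose KB *v x))"
    unfolding qf_def by (rule dot_KML)
  have c2: "qf (KB ** transpose PAB ** transpose KA) x = (transpose KA *v x) \<bullet> (PAB *v (transpose KB *v x))"
    unfolding qf_def dot_KML dot_mv[of "transpose KB *v x" "transpose PAB"] transpose_transpose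
    by (rule inner_commute)
  show ?thesis unfolding C_F_def qf_add_mat qf_KMK c1 c2 by simp
qed

lemma C_F_sym: "sym_mat CA \<Longrightarrow> sym_mat CB \<Longrightarrow> sym_mat (C_F CA CB KA KB PAB)"
  unfolding sym_mat_def C_F_def by (simp add: transpose_add matrix_transpose_mul matrix_mul_assoc add_ac)

section \<open>Worst case cross covariance\<close>

lemma outer_mv: "(\<chi> i j. p $ i * q $ j) *v v = (q \<bullet> v) *\<^sub>R (p::real^'n)"
  by (simp add: vec_eq_iff matrix_vector_mult_def inner_vec_def sum_distrib_left mult_ac)

lemma worst:
  fixes PA PB :: "real^'n^'n" and a b :: "real^'n"
  assumes pA: "pd PA" and pB: "pd PB"
  defines "\<alpha> \<equiv> sqrt (qf PA a)" and "\<beta> \<equiv> sqrt (qf PB b)"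
  defines "M0 \<equiv> (1/(\<alpha>*\<beta>)) *\<^sub>R (\<chi> i j. (PA *v a) $ i * (PB *v b) $ j)"
  shows "M0 \<in> A_split PA PB" "a \<bullet> (M0 *v b) = \<alpha> * \<beta>"
proof -
  have Mv: "M0 *v v = (1/(\<alpha>*\<beta>) * ((PB *v b) \<bullet> v)) *\<^sub>R (PA *v a)" for v
    unfolding M0_def scaleR_matrix_vector_assoc[symmetric] outer_mv by simp
  have aa: "a \<bullet> (PA *v a) = \<alpha>^2" unfolding \<alpha>_def using pd_qf[OF pA] by (simp add: qf_def)
  have bb: "(PB *v b) \<bullet> b = \<beta>^2" unfolding \<beta>_def using pd_qf[OF pB] by (simp add: qf_def inner_commute)
  show "a \<bullet> (M0 *v b) = \<alpha> * \<beta>"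
    unfolding Mv inner_scaleR_right aa bb using pd_qf[OF pA, of a] pd_qf[OF pB, of b]
    by (cases "\<alpha> * \<beta> = 0") (auto simp: power2_eq_square field_simps)
  have CSA: "\<bar>u \<bullet> (PA *v a)\<bar> \<le> sqrt (qf PA u) * \<alpha>" for u
    unfolding \<alpha>_def using qf_sym_CS[OF pd_sym[OF pA]] pd_qf[OF pA] by blast
  have CSB: "\<bar>(PB *v b) \<bullet> v\<bar> \<le> sqrt (qf PB v) * \<beta>" for v
    unfolding \<beta>_def using qf_sym_CS[OF pd_sym[OF pB]] pd_qf[OF pB] by (metis inner_commute mult.commute)
  have a0: "0 \<le> \<alpha>" "0 \<le> \<beta>" unfolding \<alpha>_def \<beta>_def using pd_qf[OF pA, of a] pd_qf[OF pB, of b] by simp_all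
  have bnd: "\<bar>u \<bullet> (M0 *v v)\<bar> \<le> sqrt (qf PA u) * sqrt (qf PB v)" for u v
  proof (cases "\<alpha> * \<beta> = 0")
    case True
    have "M0 *v v = 0" unfolding Mv using True by simp
    then show ?thesis using pd_qf[OF pA, of u] pd_qf[OF pB, of v] by simp
  next
    case False
    then have ab: "0 < \<alpha> * \<beta>" using a0 by (simp add: less_le)
    have "\<bar>u \<bullet> (M0 *v v)\<bar> = \<bar>(PB *v b) \<bullet> v\<bar> * \<bar>u \<bullet> (PA *v a)\<bar> / (\<alpha> * \<beta>)"
      unfolding Mv inner_scaleR_right using ab a0 by (simp add: abs_mult)
    also have "\<dots> \<le> (sqrt (qf PB v) * \<beta>) * (sqrt (qf PA u) * \<alpha>) / (\<alpha> * \<beta>)"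
      using ab CSA CSB a0 pd_qf[OF pB, of v] by (intro divide_right_mono mult_mono) auto
    also have "\<dots> = sqrt (qf PA u) * sqrt (qf PB v)" proof -
      have "\<alpha> \<noteq> 0" "\<beta> \<noteq> 0" using ab by auto
      then show ?thesis by (simp add: field_simps)
    qed
    finally show ?thesis .
  qed
  let ?M = "block_mat PA M0 (transpose M0) PB"
  have sym: "sym_mat ?M" unfolding sym_mat_def block_transpose
    using pd_sym[OF pA] pd_sym[OF pB] unfolding sym_mat_def by simp
  have "0 \<le> qf ?M z" for z
  proof -
    define u where "u = lft z"
    define v where "v = rgt z"
    have vt: "v \<bullet> (transpose M0 *v u) = u \<bullet> (M0 *v v)"
      unfolding dot_mv[of v] transpose_transpose by (rule inner_commute)
    have q: "qf ?M z = qf PA u + 2 * (u \<bullet> (M0 *v v)) + qf PB v"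
      unfolding qf_def block_bil u_def[symmetric] v_def[symmetric] vt by simp
    define s where "s = sqrt (qf PA u)"
    define t where "t = sqrt (qf PB v)"
    have ss: "qf PA u = s^2" "qf PB v = t^2" unfolding s_def t_def using pd_qf[OF pA] pd_qf[OF pB] by simp_all
    have "- (s * t) \<le> u \<bullet> (M0 *v v)" using bnd[of u v] unfolding s_def t_def by linarith
    then have "0 \<le> (s - t)^2 + 2 * (s*t + u \<bullet> (M0 *v v))" by simp
    then show ?thesis unfolding q ss by (simp add: power2_eq_square algebra_simps)
  qed
  then show "M0 \<in> A_split PA PB" unfolding A_split_def psd_iff_qf using sym by simp
qed

lemma cons_H1:
  fixes PA PB QA QB KA KB BF :: "real^'n^'n"
  assumes pA: "pd PA" and pB: "pd PB"
    and cf: "conservative_fusion PA PB QA QB KA KB BF"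
  shows "qf QA (transpose KA *v x) + qf QB (transpose KB *v x)
     + (sqrt (qf PA (transpose KA *v x)) + sqrt (qf PB (transpose KB *v x)))^2 \<le> qf BF x"
proof -
  define a where "a = transpose KA *v x"
  define b where "b = transpose KB *v x"
  define \<alpha> where "\<alpha> = sqrt (qf PA a)"
  define \<beta> where "\<beta> = sqrt (qf PB b)"
  define M0 where "M0 = (1/(\<alpha>*\<beta>)) *\<^sub>R (\<chi> i j. (PA *v a) $ i * (PB *v b) $ j)"
  have M0: "M0 \<in> A_split PA PB" "a \<bullet> (M0 *v b) = \<alpha> * \<beta>"
    using worst[OF pA pB, of a b] unfolding M0_def \<alpha>_def \<beta>_def by auto
  have "loewner_le (C_F (PA + QA) (PB + QB) KA KB M0) BF" using cf M0(1) unfolding conservative_fusion_def by blast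
  then have "0 \<le> qf (BF - C_F (PA + QA) (PB + QB) KA KB M0) x" unfolding loewner_le_def psd_iff_qf by blast
  then have "qf (C_F (PA + QA) (PB + QB) KA KB M0) x \<le> qf BF x" unfolding qf_diff_mat by simp
  moreover have "qf (C_F (PA + QA) (PB + QB) KA KB M0) x = qf QA a + qf QB b + (\<alpha> + \<beta>)^2"
  proof -
    have "qf PA a = \<alpha>^2" "qf PB b = \<beta>^2" unfolding \<alpha>_def \<beta>_def using pd_qf[OF pA] pd_qf[OF pB] by simp_all
    then show ?thesis unfolding qf_CF a_def[symmetric] b_def[symmetric] M0(2) qf_add_mat
      by (simp add: power2_eq_square algebra_simps)
  qed
  ultimately show ?thesis unfolding a_def b_def \<alpha>_def \<beta>_def by simp
qed

section \<open>Fusion of two estimates\<close>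

lemma qf_inv_aux:
  assumes "pd (X::real^'n^'n)"
  shows "X *v (matrix_inv X *v w) = w" "qf X (matrix_inv X *v w) = qf (matrix_inv X) w"
    "0 \<le> qf X a - 2 * (a \<bullet> w) + qf (matrix_inv X) w"
proof -
  have inv: "invertible X" using pd_invertible[OF assms] .
  show e: "X *v (matrix_inv X *v w) = w" using inv_mv[OF inv] .
  show q: "qf X (matrix_inv X *v w) = qf (matrix_inv X) w" unfolding qf_def e by (rule inner_commute)
  have "0 \<le> qf X (1 *\<^sub>R a + (-1) *\<^sub>R (matrix_inv X *v w))" using pd_qf[OF assms] by blast
  also have "\<dots> = qf X a - (a \<bullet> (X *v (matrix_inv X *v w)) + (matrix_inv X *v w) \<bullet> (X *v a)) + qf X (matrix_inv X *v w)"
    unfolding qf_comb by simp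
  also have "(matrix_inv X *v w) \<bullet> (X *v a) = a \<bullet> (X *v (matrix_inv X *v w))"
    using sym_dot[OF pd_sym[OF assms]] by blast
  finally show "0 \<le> qf X a - 2 * (a \<bullet> w) + qf (matrix_inv X) w" unfolding e q by simp
qed

lemma fuse_min:
  fixes X Y K L :: "real^'n^'n"
  assumes pX: "pd X" and pY: "pd Y" and KL: "K + L = mat 1"
  shows "qf (matrix_inv (matrix_inv X + matrix_inv Y)) x \<le> qf X (transpose K *v x) + qf Y (transpose L *v x)"
proof -
  define S where "S = matrix_inv X + matrix_inv Y"
  have pS: "pd S" unfolding S_def using pd_add inv_pd pX pY by blast
  define w where "w = matrix_inv S *v x"
  have Sw: "S *v w = x" unfolding w_def using inv_mv[OF pd_invertible[OF pS]] .
  define a where "a = transpose K *v x"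
  define b where "b = transpose L *v x"
  have ab: "a + b = x" unfolding a_def b_def
    by (metis KL matrix_vector_mult_add_rdistrib matrix_vector_mul_lid transpose_add transpose_mat)
  have "0 \<le> qf X a - 2 * (a \<bullet> w) + qf (matrix_inv X) w" by (rule qf_inv_aux(3)[OF pX])
  moreover have "0 \<le> qf Y b - 2 * (b \<bullet> w) + qf (matrix_inv Y) w" by (rule qf_inv_aux(3)[OF pY])
  moreover have "qf (matrix_inv X) w + qf (matrix_inv Y) w = w \<bullet> x"
  proof -
    have "qf (matrix_inv X) w + qf (matrix_inv Y) w = qf S w" unfolding S_def qf_add_mat ..
    also have "\<dots> = w \<bullet> x" unfolding qf_def Sw ..
    finally show ?thesis .
  qed
  moreover have "a \<bullet> w + b \<bullet> w = x \<bullet> w" unfolding ab[symmetric] inner_add_left ..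
  moreover have "qf (matrix_inv S) x = x \<bullet> w" unfolding qf_def w_def ..
  ultimately show ?thesis unfolding S_def[symmetric] a_def[symmetric] b_def[symmetric]
    by (simp add: inner_commute)
qed

lemma fuse_eq:
  fixes X Y :: "real^'n^'n"
  assumes pX: "pd X" and pY: "pd Y"
  defines "F \<equiv> matrix_inv (matrix_inv X + matrix_inv Y)"
  shows "F ** matrix_inv X + F ** matrix_inv Y = mat 1"
    "qf X (transpose (F ** matrix_inv X) *v x) + qf Y (transpose (F ** matrix_inv Y) *v x) = qf F x"
    "pd F"
proof -
  define S where "S = matrix_inv X + matrix_inv Y"
  have pS: "pd S" unfolding S_def using pd_add inv_pd pX pY by blast
  have FS: "F = matrix_inv S" unfolding F_def S_def ..
  show "F ** matrix_inv X + F ** matrix_inv Y = mat 1"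
    unfolding matrix_add_ldistrib[symmetric] FS S_def[symmetric] using inv_props(2)[OF pd_invertible[OF pS]] .
  show "pd F" unfolding FS using inv_pd[OF pS] .
  then have sF: "transpose F = F" using pd_sym unfolding sym_mat_def by blast
  have sX: "transpose (matrix_inv X) = matrix_inv X"
    using pd_sym[OF inv_pd[OF pX]] unfolding sym_mat_def .
  have sY: "transpose (matrix_inv Y) = matrix_inv Y"
    using pd_sym[OF inv_pd[OF pY]] unfolding sym_mat_def .
  define w where "w = F *v x"
  have Sw: "S *v w = x" unfolding w_def FS using inv_mv[OF pd_invertible[OF pS]] .
  have tX: "transpose (F ** matrix_inv X) *v x = matrix_inv X *v w"
    unfolding matrix_transpose_mul sX sF w_def matrix_vector_mul_assoc ..
  have tY: "transpose (F ** matrix_inv Y) *v x = matrix_inv Y *v w"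
    unfolding matrix_transpose_mul sY sF w_def matrix_vector_mul_assoc ..
  show "qf X (transpose (F ** matrix_inv X) *v x) + qf Y (transpose (F ** matrix_inv Y) *v x) = qf F x"
  proof -
    have "qf (matrix_inv X) w + qf (matrix_inv Y) w = qf S w" unfolding S_def qf_add_mat ..
    also have "\<dots> = w \<bullet> x" unfolding qf_def Sw ..
    also have "\<dots> = qf F x" unfolding qf_def w_def by (rule inner_commute)
    finally show ?thesis unfolding tX tY qf_inv_aux(2)[OF pX] qf_inv_aux(2)[OF pY] .
  qed
qed

section \<open>SCI bounds\<close>

lemma num_CI:
  fixes \<alpha> \<beta> w :: real
  assumes "0 < w" "w < 1"
  shows "(\<alpha> + \<beta>)^2 \<le> \<alpha>^2 / w + \<beta>^2 / (1 - w)"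
proof -
  have w1: "0 < 1 - w" using assms by simp
  have "\<alpha>^2 / w + \<beta>^2 / (1 - w) - (\<alpha> + \<beta>)^2 = ((1-w)*\<alpha> - w*\<beta>)^2 / (w * (1 - w))"
    using assms w1 by (simp add: field_simps power2_eq_square)
  also have "\<dots> \<ge> 0" using assms w1 by simp
  finally show ?thesis by simp
qed

lemma G_div:
  assumes "0 < w" "w < 1" "0 \<le> G r a b w"
  shows "a / w + b / (1 - w) \<le> r"
proof -
  have w1: "0 < 1 - w" using assms by simp
  have "a / w + b / (1 - w) = ((1-w)*a + w*b) / (w*(1-w))" using assms w1 by (simp add: field_simps)
  also have "\<dots> \<le> r" using assms w1 unfolding G_def by (simp add: divide_le_eq algebra_simps)
  finally show ?thesis .
qed

lemma BSCI0:
  assumes "pd PB" "pd QB"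
  shows "B_SCI PA PB QA QB 0 = PB + QB"
  unfolding B_SCI_def using inv_inv[OF pd_invertible[OF pd_add[OF assms]]] by simp

lemma BSCI1:
  assumes "pd PA" "pd QA"
  shows "B_SCI PA PB QA QB 1 = PA + QA"
  unfolding B_SCI_def using inv_inv[OF pd_invertible[OF pd_add[OF assms]]] by simp

lemma BSCI_mid:
  fixes PA PB QA QB :: "real^'n^'n"
  assumes pA: "pd PA" and pB: "pd PB" and qA: "pd QA" and qB: "pd QB" and w: "0 < w" "w < 1"
  defines "X \<equiv> (1/w) *\<^sub>R (PA + w *\<^sub>R QA)" and "Y \<equiv> (1/(1-w)) *\<^sub>R (PB + (1-w) *\<^sub>R QB)"
  shows "B_SCI PA PB QA QB w = matrix_inv (matrix_inv X + matrix_inv Y)" "pd X" "pd Y"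
    "qf X a = qf PA a / w + qf QA a" "qf Y b = qf PB b / (1 - w) + qf QB b"
proof -
  have w1: "0 < 1 - w" using w by simp
  have p1: "pd (PA + w *\<^sub>R QA)" using pd_add[OF pA pd_scale[OF qA w(1)]] .
  have p2: "pd (PB + (1-w) *\<^sub>R QB)" using pd_add[OF pB pd_scale[OF qB w1]] .
  have iX: "matrix_inv X = w *\<^sub>R matrix_inv (PA + w *\<^sub>R QA)"
    unfolding X_def using inv_scale[OF pd_invertible[OF p1], of "1/w"] w by simp
  have iY: "matrix_inv Y = (1-w) *\<^sub>R matrix_inv (PB + (1-w) *\<^sub>R QB)"
    unfolding Y_def using inv_scale[OF pd_invertible[OF p2], of "1/(1-w)"] w1 by simp
  show "B_SCI PA PB QA QB w = matrix_inv (matrix_inv X + matrix_inv Y)"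
    unfolding B_SCI_def iX iY ..
  show "pd X" unfolding X_def using pd_scale[OF p1] w by simp
  show "pd Y" unfolding Y_def using pd_scale[OF p2] w1 by simp
  show "qf X a = qf PA a / w + qf QA a" unfolding X_def qf_scale_mat qf_add_mat using w
    by (simp add: field_simps)
  show "qf Y b = qf PB b / (1 - w) + qf QB b" unfolding Y_def qf_scale_mat qf_add_mat using w1
    by (simp add: field_simps)
qed

lemma loewner_refl: "sym_mat M \<Longrightarrow> loewner_le M M"
  unfolding loewner_le_def psd_iff_qf sym_mat_def by (simp add: transpose_zero qf_def)

lemma KAB_sum: "KA + KB = mat 1 \<Longrightarrow> transpose KA *v x + transpose KB *v x = (x::real^'n)"
  by (metis matrix_vector_mult_add_rdistrib matrix_vector_mul_lid transpose_add transpose_mat)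

lemma sci_good:
  fixes PA PB QA QB :: "real^'n^'n"
  assumes pA: "pd PA" and pB: "pd PB" and qA: "pd QA" and qB: "pd QB" and w: "w \<in> {0..1}"
  shows "pd (B_SCI PA PB QA QB w) \<and> (\<exists>KA' KB'. conservative_fusion PA PB QA QB KA' KB' (B_SCI PA PB QA QB w))"
proof -
  have CA: "pd (PA + QA)" using pd_add[OF pA qA] .
  have CB: "pd (PB + QB)" using pd_add[OF pB qB] .
  have sC: "sym_mat (PA + QA)" "sym_mat (PB + QB)" using CA CB pd_sym by auto
  consider "w = 0" | "w = 1" | "0 < w" "w < 1" using w by fastforce
  then show ?thesis
  proof cases
    case 1
    have "C_F (PA + QA) (PB + QB) 0 (mat 1) PAB = PB + QB" for PAB
      unfolding C_F_def by (simp add: transpose_zero)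
    then have "conservative_fusion PA PB QA QB 0 (mat 1) (PB + QB)"
      unfolding conservative_fusion_def using loewner_refl[OF sC(2)] sC by simp
    then show ?thesis using CB BSCI0[OF pB qB] 1 by metis
  next
    case 2
    have "C_F (PA + QA) (PB + QB) (mat 1) 0 PAB = PA + QA" for PAB
      unfolding C_F_def by (simp add: transpose_zero)
    then have "conservative_fusion PA PB QA QB (mat 1) 0 (PA + QA)"
      unfolding conservative_fusion_def using loewner_refl[OF sC(1)] sC by simp
    then show ?thesis using CA BSCI1[OF pA qA] 2 by metis
  next
    case 3
    define X where "X = (1/w) *\<^sub>R (PA + w *\<^sub>R QA)"
    define Y where "Y = (1/(1-w)) *\<^sub>R (PB + (1-w) *\<^sub>R QB)"
    note M = BSCI_mid[OF pA pB qA qB 3, folded X_def Y_def]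
    define F where "F = matrix_inv (matrix_inv X + matrix_inv Y)"
    note FE = fuse_eq[OF M(2) M(3), folded F_def]
    define KA' where "KA' = F ** matrix_inv X"
    define KB' where "KB' = F ** matrix_inv Y"
    have "conservative_fusion PA PB QA QB KA' KB' F"
      unfolding conservative_fusion_def
    proof (intro conjI ballI)
      show "KA' + KB' = mat 1" unfolding KA'_def KB'_def using FE(1) .
      show "sym_mat F" using pd_sym[OF FE(3)] .
      fix PAB assume adm: "PAB \<in> A_split PA PB"
      show "loewner_le (C_F (PA + QA) (PB + QB) KA' KB' PAB) F"
        unfolding loewner_le_def psd_iff_qf
      proof (intro conjI allI)
        show "sym_mat (F - C_F (PA + QA) (PB + QB) KA' KB' PAB)"
          using sym_diff pd_sym[OF FE(3)] C_F_sym[OF sC] by blast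
        fix x
        define a where "a = transpose KA' *v x"
        define b where "b = transpose KB' *v x"
        have "qf (C_F (PA + QA) (PB + QB) KA' KB' PAB) x = qf PA a + qf QA a + qf PB b + qf QB b + 2 * (a \<bullet> (PAB *v b))"
          unfolding qf_CF a_def[symmetric] b_def[symmetric] qf_add_mat by simp
        also have "\<dots> \<le> qf QA a + qf QB b + (sqrt (qf PA a) + sqrt (qf PB b))^2"
          using adm_bound[OF adm, of a b] pd_qf[OF pA, of a] pd_qf[OF pB, of b]
          by (simp add: power2_eq_square algebra_simps)
        also have "\<dots> \<le> qf QA a + qf QB b + (sqrt (qf PA a))^2 / w + (sqrt (qf PB b))^2 / (1 - w)"
          using num_CI[OF 3] by simp
        also have "\<dots> = qf X a + qf Y b" unfolding M(4) M(5) using pd_qf[OF pA, of a] pd_qf[OF pB, of b] by simp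
        also have "\<dots> = qf F x" unfolding a_def b_def KA'_def KB'_def using FE(2) .
        finally show "0 \<le> qf (F - C_F (PA + QA) (PB + QB) KA' KB' PAB) x" unfolding qf_diff_mat by simp
      qed
    qed
    then show ?thesis using FE(3) M(1) F_def by metis
  qed
qed

lemma cons_good:
  fixes PA PB QA QB KA KB BF :: "real^'n^'n"
  assumes pA: "pd PA" and pB: "pd PB" and qA: "pd QA" and qB: "pd QB"
    and cf: "conservative_fusion PA PB QA QB KA KB BF"
  shows "psd BF \<and> (\<exists>w\<in>{0..1}. loewner_le (B_SCI PA PB QA QB w) BF)"
proof -
  note H1 = cons_H1[OF pA pB cf]
  have KK: "KA + KB = mat 1" and sBF: "sym_mat BF" using cf unfolding conservative_fusion_def by auto
  have "0 \<le> qf BF x" for x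
  proof -
    have "0 \<le> qf QA (transpose KA *v x) + qf QB (transpose KB *v x)
     + (sqrt (qf PA (transpose KA *v x)) + sqrt (qf PB (transpose KB *v x)))^2"
      using pd_qf[OF qA] pd_qf[OF qB] by (intro add_nonneg_nonneg) auto
    then show ?thesis using H1[of x] by linarith
  qed
  then have psdBF: "psd BF" unfolding psd_iff_qf using sBF by simp
  define R where "R = BF - KA ** QA ** transpose KA - KB ** QB ** transpose KB"
  define A where "A = KA ** PA ** transpose KA"
  define B where "B = KB ** PB ** transpose KB"
  have qR: "qf R x = qf BF x - qf QA (transpose KA *v x) - qf QB (transpose KB *v x)" for x
    unfolding R_def qf_diff_mat qf_KMK ..
  have qA': "qf A x = qf PA (transpose KA *v x)" for x unfolding A_def qf_KMK ..
  have qB': "qf B x = qf PB (transpose KB *v x)" for x unfolding B_def qf_KMK ..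
  have A0: "\<forall>x. 0 \<le> qf A x" unfolding qA' using pd_qf[OF pA] by blast
  have B0: "\<forall>x. 0 \<le> qf B x" unfolding qB' using pd_qf[OF pB] by blast
  have H: "\<forall>x. sqrt (qf A x) + sqrt (qf B x) \<le> sqrt (qf R x)"
  proof
    fix x
    have "(sqrt (qf A x) + sqrt (qf B x))^2 \<le> qf R x" unfolding qR qA' qB' using H1[of x] by simp
    then have "sqrt ((sqrt (qf A x) + sqrt (qf B x))^2) \<le> sqrt (qf R x)" by (rule real_sqrt_le_mono)
    moreover have "0 \<le> sqrt (qf A x) + sqrt (qf B x)" using A0 B0 by simp
    ultimately show "sqrt (qf A x) + sqrt (qf B x) \<le> sqrt (qf R x)" by simp
  qed
  obtain w where w: "w \<in> {0..1}" and Gw: "\<And>x. 0 \<le> G (qf R x) (qf A x) (qf B x) w"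
    using core[OF A0 B0 H] by blast
  have sCB: "sym_mat (PB + QB)" "sym_mat (PA + QA)" using pd_sym pd_add pA pB qA qB by blast+
  consider "w = 0" | "w = 1" | "0 < w" "w < 1" using w by fastforce
  then have "loewner_le (B_SCI PA PB QA QB w) BF"
  proof cases
    case 1
    have a0: "transpose KA *v x = 0" for x
    proof -
      have "qf A x \<le> 0" using Gw[of x] 1 unfolding G_def by simp
      then have "qf PA (transpose KA *v x) = 0" using A0 unfolding qA' by (meson antisym)
      then show ?thesis using pd_qf0[OF pA] by blast
    qed
    have b0: "transpose KB *v x = x" for x using KAB_sum[OF KK, of x] a0[of x] by simp
    have "qf (PB + QB) x \<le> qf BF x" for x
      using H1[of x] unfolding a0 b0 qf_add_mat using pd_qf[OF pB, of x] by (simp add: qf_def)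
    then show ?thesis unfolding 1 BSCI0[OF pB qB] loewner_le_def psd_iff_qf qf_diff_mat
      using sym_diff[OF sBF sCB(1)] by simp
  next
    case 2
    have b0: "transpose KB *v x = 0" for x
    proof -
      have "qf B x \<le> 0" using Gw[of x] 2 unfolding G_def by simp
      then have "qf PB (transpose KB *v x) = 0" using B0 unfolding qB' by (meson antisym)
      then show ?thesis using pd_qf0[OF pB] by blast
    qed
    have a0: "transpose KA *v x = x" for x using KAB_sum[OF KK, of x] b0[of x] by simp
    have "qf (PA + QA) x \<le> qf BF x" for x
      using H1[of x] unfolding a0 b0 qf_add_mat using pd_qf[OF pA, of x] by (simp add: qf_def)
    then show ?thesis unfolding 2 BSCI1[OF pA qA] loewner_le_def psd_iff_qf qf_diff_mat
      using sym_diff[OF sBF sCB(2)] by simp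
  next
    case 3
    define X where "X = (1/w) *\<^sub>R (PA + w *\<^sub>R QA)"
    define Y where "Y = (1/(1-w)) *\<^sub>R (PB + (1-w) *\<^sub>R QB)"
    note M = BSCI_mid[OF pA pB qA qB 3, folded X_def Y_def]
    define F where "F = matrix_inv (matrix_inv X + matrix_inv Y)"
    note FE = fuse_eq[OF M(2) M(3), folded F_def]
    have "qf F x \<le> qf BF x" for x
    proof -
      have "qf F x \<le> qf X (transpose KA *v x) + qf Y (transpose KB *v x)"
        unfolding F_def by (rule fuse_min[OF M(2) M(3) KK])
      also have "\<dots> = qf PA (transpose KA *v x) / w + qf PB (transpose KB *v x) / (1 - w)
          + qf QA (transpose KA *v x) + qf QB (transpose KB *v x)" unfolding M(4) M(5) by simp
      also have "\<dots> \<le> qf BF x"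
        using G_div[OF 3 Gw[of x]] unfolding qR qA' qB' by simp
      finally show ?thesis .
    qed
    then show ?thesis unfolding M(1) F_def[symmetric] loewner_le_def psd_iff_qf qf_diff_mat
      using sym_diff[OF sBF pd_sym[OF FE(3)]] by simp
  qed
  then show ?thesis using psdBF w by blast
qed

theorem theorem1:
  fixes PA PB QA QB KA KB BF :: "real^'n^'n"
    and J :: "real^'n^'n \<Rightarrow> real"
  assumes "pd PA" and "pd PB" and "pd QA" and "pd QB"
    and "increasing_cost J"
    and "conservative_fusion PA PB QA QB KA KB BF"
  shows "optimal_fusion J PA PB QA QB KA KB BF \<longleftrightarrow>
    (\<exists>\<omega>s \<in> {0..1}. (\<forall>\<omega> \<in> {0..1}. J (B_SCI PA PB QA QB \<omega>s) \<le> J (B_SCI PA PB QA QB \<omega>))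
        \<and> BF = B_SCI PA PB QA QB \<omega>s)"
proof -
  note F1 = sci_good[OF assms(1-4)]
  note F2 = cons_good[OF assms(1-4)]
  have J1: "\<And>P Q. psd P \<Longrightarrow> psd Q \<Longrightarrow> loewner_le P Q \<Longrightarrow> J P \<le> J Q"
    and J2: "\<And>P Q. psd P \<Longrightarrow> psd Q \<Longrightarrow> loewner_le P Q \<Longrightarrow> P \<noteq> Q \<Longrightarrow> J P < J Q"
    using assms(5) unfolding increasing_cost_def by blast+
  let ?S = "B_SCI PA PB QA QB"
  show ?thesis
  proof
    assume opt: "optimal_fusion J PA PB QA QB KA KB BF"
    then have optJ: "\<And>KA' KB' BF'. conservative_fusion PA PB QA QB KA' KB' BF' \<Longrightarrow> J BF \<le> J BF'"
      unfolding optimal_fusion_def by blast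
    obtain w where w: "w \<in> {0..1}" and le: "loewner_le (?S w) BF" and pBF: "psd BF"
      using F2[OF assms(6)] by blast
    have pS: "psd (?S w)" using F1[OF w] pd_psd by blast
    have "J BF \<le> J (?S w)" using F1[OF w] optJ by blast
    then have eq: "BF = ?S w" using J2[OF pS pBF le] by force
    have "\<forall>\<omega>\<in>{0..1}. J (?S w) \<le> J (?S \<omega>)"
      using F1 optJ eq by blast
    then show "\<exists>\<omega>s \<in> {0..1}. (\<forall>\<omega> \<in> {0..1}. J (?S \<omega>s) \<le> J (?S \<omega>)) \<and> BF = ?S \<omega>s"
      using w eq by blast
  next
    assume "\<exists>\<omega>s \<in> {0..1}. (\<forall>\<omega> \<in> {0..1}. J (?S \<omega>s) \<le> J (?S \<omega>)) \<and> BF = ?S \<omega>s"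
    then obtain ws where ws: "ws \<in> {0..1}" and mn: "\<forall>\<omega> \<in> {0..1}. J (?S ws) \<le> J (?S \<omega>)" and eq: "BF = ?S ws"
      by blast
    have "J BF \<le> J BF'" if cf': "conservative_fusion PA PB QA QB KA' KB' BF'" for KA' KB' BF'
    proof -
      obtain w where w: "w \<in> {0..1}" and le: "loewner_le (?S w) BF'" and pBF: "psd BF'"
        using F2[OF cf'] by blast
      have pS: "psd (?S w)" using F1[OF w] pd_psd by blast
      have "J (?S w) \<le> J BF'" using J1[OF pS pBF le] .
      moreover have "J BF \<le> J (?S w)" using mn w eq by blast
      ultimately show ?thesis by linarith
    qed
    then show "optimal_fusion J PA PB QA QB KA KB BF"
      unfolding optimal_fusion_def using assms(6) by blast
  qed
qed

end
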